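(* For every simple type $A$ there exists a profinite $\lambda$-term $\Omega_A \in \widehat{\Lambda}((A \Rightarrow A) \Rightarrow A \Rightarrow A)$ such that for every $M \in \widehat{\Lambda}(A \Rightarrow A)$, the profinite $\lambda$-term $\Omega_A\,M \in \widehat{\Lambda}(A\Rightarrow A)$ satisfies the idempotency equation $(\Omega_A\,M) \circ (\Omega_A\,M) = \Omega_A\,M$.
   Context: Simple types are generated from a base type $o$ by $\Rightarrow$; $\Lambda(A)$ is the set of closed simply typed $\lambda$-terms of type $A$ modulo $\beta\eta$. For a finite set $Q$: $[\![o]\!]_Q = Q$, $[\![A\Rightarrow B]\!]_Q$ = all functions $[\![A]\!]_Q\to[\![B]\!]_Q$, $[\![M]\!]_Q$ the standard interpretation, $D_Q(A) = \{[\![M]\!]_Q : M\in\Lambda(A)\}$. Logical relations: for $R\subseteq Q\times Q'$, $[\![o]\!]_R = R$, $[\![A\Rightarrow B]\!]_R = \{(g,h) : \forall (x,y)\in[\![A]\!]_R,\ (g(x),h(y))\in[\![B]\!]_R\}$. A partial surjection $f\colon Q\twoheadrightarrow Q'$ is the graph of a partial function surjective onto $Q'$. A profinite $\lambda$-term of type $A$ is a family $\theta=(\theta_Q)$ over finite sets $Q$ with $\theta_Q\in D_Q(A)$ and $(\theta_Q,\theta_{Q'})\in[\![A]\!]_f$ for every partial surjection $f\colon Q\twoheadrightarrow Q'$; $\widehat{\Lambda}(A)$ denotes their set. Application and composition of profinite $\lambda$-terms are computed componentwise: for $\Phi\in\widehat{\Lambda}(B\Rightarrow C)$ and $\psi\in\widehat{\Lambda}(B)$,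 $(\Phi\,\psi)_Q = \Phi_Q(\psi_Q)$; for $u, v \in \widehat{\Lambda}(A\Rightarrow A)$, $u \circ v$ denotes the profinite $\lambda$-term $\lambda x.\,v(u\,x)$, i.e. $(u\circ v)_Q = v_Q \circ u_Q$. *)

theory Defs
  imports "HOL-Library.FSet"
begin

datatype ty = Base | Arr ty ty

datatype tm = Var nat | Lam ty tm | App tm tm

inductive typing :: "ty list \<Rightarrow> tm \<Rightarrow> ty \<Rightarrow> bool" where
  t_var: "i < length \<Gamma> \<Longrightarrow> \<Gamma> ! i = T \<Longrightarrow> typing \<Gamma> (Var i) T"
| t_lam: "typing (T # \<Gamma>) M U \<Longrightarrow> typing \<Gamma> (Lam T M) (Arr T U)"
| t_app: "typing \<Gamma> M (Arr T U) \<Longrightarrow> typing \<Gamma> N T \<Longrightarrow> typing \<Gamma> (App M N) U"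

datatype val = Atom nat | Fn "(val \<times> val) fset"

fun app :: "val \<Rightarrow> val \<Rightarrow> val" where
  "app (Fn g) x = (THE y. (x, y) |\<in>| g)"
| "app (Atom a) x = undefined"

fun tyint :: "nat set \<Rightarrow> ty \<Rightarrow> val set" where
  "tyint Q Base = Atom ` Q"
| "tyint Q (Arr A B) =
     {Fn g | g. fset g \<subseteq> tyint Q A \<times> tyint Q B \<and>
                (\<forall>x\<in>tyint Q A. \<exists>!y. (x, y) |\<in>| g)}"

primrec sem :: "nat set \<Rightarrow> tm \<Rightarrow> val list \<Rightarrow> val" where
  "sem Q (Var n) \<rho> = \<rho> ! n"
| "sem Q (Lam T M) \<rho> = Fn (Abs_fset ((\<lambda>x. (x, sem Q M (x # \<rho>))) ` tyint Q T))"
| "sem Q (App M N) \<rho> = app (sem Q M \<rho>) (sem Q N \<rho>)"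

definition D :: "nat set \<Rightarrow> ty \<Rightarrow> val set" where
  "D Q A = {sem Q M [] | M. typing [] M A}"

fun lrel :: "nat set \<Rightarrow> nat set \<Rightarrow> (nat \<times> nat) set \<Rightarrow> ty \<Rightarrow> (val \<times> val) set" where
  "lrel Q Q' R Base = {(Atom a, Atom b) | a b. (a, b) \<in> R}"
| "lrel Q Q' R (Arr A B) =
     {(g, h). g \<in> tyint Q (Arr A B) \<and> h \<in> tyint Q' (Arr A B) \<and>
        (\<forall>(x, y) \<in> lrel Q Q' R A. (app g x, app h y) \<in> lrel Q Q' R B)}"

definition partial_surj :: "nat set \<Rightarrow> nat set \<Rightarrow> (nat \<times> nat) set \<Rightarrow> bool" where
  "partial_surj Q Q' R \<longleftrightarrow> R \<subseteq> Q \<times> Q' \<and> single_valued R \<and> Range R = Q'"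

definition profinite :: "ty \<Rightarrow> (nat set \<Rightarrow> val) \<Rightarrow> bool" where
  "profinite A \<theta> \<longleftrightarrow>
     (\<forall>Q. finite Q \<longrightarrow> \<theta> Q \<in> D Q A) \<and>
     (\<forall>Q Q' R. finite Q \<and> finite Q' \<and> partial_surj Q Q' R \<longrightarrow> (\<theta> Q, \<theta> Q') \<in> lrel Q Q' R A)"

definition papp :: "(nat set \<Rightarrow> val) \<Rightarrow> (nat set \<Rightarrow> val) \<Rightarrow> nat set \<Rightarrow> val" where
  "papp \<Phi> \<psi> Q = app (\<Phi> Q) (\<psi> Q)"

text \<open>vcomp u v is the graph of v o u (first u, then v).\<close>
fun vcomp :: "val \<Rightarrow> val \<Rightarrow> val" where
  "vcomp (Fn g) v = Fn ((\<lambda>(x, y). (x, app v y)) |`| g)"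
| "vcomp (Atom a) v = undefined"

text \<open>u o v = lambda x. v (u x), i.e. (u o v)_Q = v_Q o u_Q.\<close>
definition pcomp :: "(nat set \<Rightarrow> val) \<Rightarrow> (nat set \<Rightarrow> val) \<Rightarrow> nat set \<Rightarrow> val" where
  "pcomp u v Q = vcomp (u Q) (v Q)"

end

theory Submission
  imports Defs
begin

primrec body :: "nat \<Rightarrow> tm" where
  "body 0 = Var 0"
| "body (Suc n) = App (Var 1) (body n)"

definition church :: "ty \<Rightarrow> nat \<Rightarrow> tm" where
  "church A n = Lam (Arr A A) (Lam A (body n))"

definition graph :: "val set \<Rightarrow> (val \<Rightarrow> val) \<Rightarrow> val" where
  "graph S h = Fn (Abs_fset ((\<lambda>x. (x, h x)) ` S))"

lemma typing_body: "typing [A, Arr A A] (body n) A"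
  proof (induction n)
  case 0 show ?case by simp (rule t_var; simp)
next
  case (Suc n)
  have "typing [A, Arr A A] (Var 1) (Arr A A)" by (rule t_var) auto
  then show ?case using Suc by (auto intro: t_app)
qed

lemma typing_church: "typing [] (church A n) (Arr (Arr A A) (Arr A A))"
  unfolding church_def by (auto intro!: typing.intros typing_body)

lemma sem_body: "sem Q (body n) [x, f] = (app f ^^ n) x"
  by (induction n) auto

lemma sem_church: "sem Q (church A n) [] =
   graph (tyint Q (Arr A A)) (\<lambda>f. graph (tyint Q A) (\<lambda>x. (app f ^^ n) x))"
  unfolding church_def graph_def by (simp add: sem_body)

lemma finite_fsets: "finite Z \<Longrightarrow> finite {g. fset g \<subseteq> Z}"
proof -
  assume "finite Z"
  have "{g. fset g \<subseteq> Z} \<subseteq> Abs_fset ` Pow Z"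
    by (auto simp: image_iff fset_inverse intro!: bexI[of _ "fset _"])
  then show ?thesis using \<open>finite Z\<close> finite_subset by blast
qed

lemma finite_tyint: "finite Q \<Longrightarrow> finite (tyint Q A)"
proof (induction A)
  case Base then show ?case by simp
next
  case (Arr A B)
  have "tyint Q (Arr A B) \<subseteq> Fn ` {g. fset g \<subseteq> tyint Q A \<times> tyint Q B}" by auto
  moreover have "finite {g. fset g \<subseteq> tyint Q A \<times> tyint Q B}"
    using Arr by (intro finite_fsets) auto
  ultimately show ?case using finite_subset by blast
qed

lemma app_graph: "finite S \<Longrightarrow> x \<in> S \<Longrightarrow> app (graph S h) x = h x"
  unfolding graph_def by (auto simp: Abs_fset_inverse intro!: the_equality)

lemma fset_graph: "finite S \<Longrightarrow> fset (Abs_fset ((\<lambda>x. (x, h x)) ` S)) = (\<lambda>x. (x, h x)) ` S"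
  by (simp add: Abs_fset_inverse)

lemma graph_tyint:
  assumes "finite Q" "\<And>x. x \<in> tyint Q A \<Longrightarrow> h x \<in> tyint Q B"
  shows "graph (tyint Q A) h \<in> tyint Q (Arr A B)"
  using assms finite_tyint[OF assms(1), of A]
  unfolding graph_def by (auto simp: Abs_fset_inverse)

lemma app_tyint:
  assumes "f \<in> tyint Q (Arr A B)" "x \<in> tyint Q A"
  shows "app f x \<in> tyint Q B"
proof -
  from assms obtain g where g: "f = Fn g" "fset g \<subseteq> tyint Q A \<times> tyint Q B"
    "\<exists>!y. (x, y) |\<in>| g" by auto
  then have "(x, app f x) |\<in>| g" by (auto intro: theI')
  then show ?thesis using g by auto
qed

lemma funpow_tyint:
  assumes "f \<in> tyint Q (Arr A A)" "x \<in> tyint Q A"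
  shows "(app f ^^ n) x \<in> tyint Q A"
  by (induction n) (use assms app_tyint in auto)

lemma lrel_sub:
  assumes "R \<subseteq> Q \<times> Q'" "(x, y) \<in> lrel Q Q' R A"
  shows "x \<in> tyint Q A \<and> y \<in> tyint Q' A"
  using assms by (cases A) auto

lemma funpow_lrel:
  assumes "(f, f') \<in> lrel Q Q' R (Arr A A)" "(x, x') \<in> lrel Q Q' R A"
  shows "((app f ^^ n) x, (app f' ^^ n) x') \<in> lrel Q Q' R A"
proof (induction n)
  case 0 then show ?case using assms by simp
next
  case (Suc n)
  then show ?case using assms(1) by auto
qed

lemma idem_aux:
  assumes "finite S" "\<And>y. y \<in> S \<Longrightarrow> h y \<in> S" "x \<in> S"
  shows "(h ^^ fact (card S)) ((h ^^ fact (card S)) x) = (h ^^ fact (card S)) x"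
proof -
  let ?k = "card S"
  have inS: "(h ^^ i) x \<in> S" for i by (induction i) (use assms in auto)
  have "\<not> inj_on (\<lambda>i. (h ^^ i) x) {0..?k}"
  proof
    assume "inj_on (\<lambda>i. (h ^^ i) x) {0..?k}"
    then have "card ((\<lambda>i. (h ^^ i) x) ` {0..?k}) = ?k + 1" by (simp add: card_image)
    moreover have "card ((\<lambda>i. (h ^^ i) x) ` {0..?k}) \<le> ?k"
      using inS assms(1) by (intro card_mono) auto
    ultimately show False by simp
  qed
  then obtain i j where ij: "i < j" "j \<le> ?k" "(h ^^ i) x = (h ^^ j) x"
    unfolding inj_on_def by (metis atLeastAtMost_iff linorder_neqE_nat)
  define p where "p = j - i"
  have p: "p \<ge> 1" "p \<le> ?k" using ij by (auto simp: p_def)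
  have per: "(h ^^ (m + i + p)) x = (h ^^ (m + i)) x" for m
  proof -
    have "(h ^^ (m + i + p)) x = (h ^^ m) ((h ^^ j) x)"
      using ij by (simp add: p_def funpow_add)
    also have "\<dots> = (h ^^ (m + i)) x" using ij by (simp add: funpow_add)
    finally show ?thesis .
  qed
  have pert: "(h ^^ (m + i + t * p)) x = (h ^^ (m + i)) x" for m t
  proof (induction t)
    case 0 then show ?case by simp
  next
    case (Suc t)
    have "(h ^^ (m + i + Suc t * p)) x = (h ^^ ((m + t * p) + i + p)) x"
      by (simp add: algebra_simps)
    also have "\<dots> = (h ^^ (m + i + t * p)) x" using per[of "m + t * p"]
      by (simp add: algebra_simps)
    finally show ?case using Suc by simp
  qed
  have dvd: "p dvd fact ?k" using p by (simp add: dvd_fact)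
  then obtain t where t: "fact ?k = p * t" by blast
  have ik: "i \<le> fact ?k" using ij fact_ge_self[of ?k] by linarith
  have eq: "fact ?k + fact ?k = fact ?k - i + i + t * p"
    using ik t by simp
  have "(h ^^ fact ?k) ((h ^^ fact ?k) x) = (h ^^ (fact ?k + fact ?k)) x"
    by (simp add: funpow_add)
  also have "\<dots> = (h ^^ (fact ?k - i + i + t * p)) x" by (simp only: eq)
  also have "\<dots> = (h ^^ (fact ?k - i + i)) x" by (rule pert)
  also have "\<dots> = (h ^^ fact ?k) x" using ik by simp
  finally show ?thesis .
qed

lemma idem_mult:
  assumes "finite S" "\<And>y. y \<in> S \<Longrightarrow> h y \<in> S" "x \<in> S"
  shows "(h ^^ (fact (card S) * Suc c)) x = (h ^^ fact (card S)) x"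
proof (induction c)
  case 0 then show ?case by simp
next
  case (Suc c)
  have "(h ^^ (fact (card S) * Suc (Suc c))) x
     = (h ^^ fact (card S)) ((h ^^ (fact (card S) * Suc c)) x)"
    by (metis funpow_add mult_Suc_right o_apply)
  also have "\<dots> = (h ^^ fact (card S)) x" using Suc idem_aux[OF assms] by simp
  finally show ?case .
qed

definition Om :: "ty \<Rightarrow> nat set \<Rightarrow> val" where
  "Om A Q = sem Q (church A (fact (card (tyint Q A)))) []"

lemma Om_graph: "Om A Q = graph (tyint Q (Arr A A))
   (\<lambda>f. graph (tyint Q A) (\<lambda>x. (app f ^^ fact (card (tyint Q A))) x))"
  unfolding Om_def sem_church ..

lemma Om_tyint:
  assumes "finite Q"
  shows "Om A Q \<in> tyint Q (Arr (Arr A A) (Arr A A))"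
  unfolding Om_graph
  by (intro graph_tyint assms) (auto intro: funpow_tyint assms)

lemma app_Om:
  assumes "finite Q" "f \<in> tyint Q (Arr A A)"
  shows "app (Om A Q) f = graph (tyint Q A) (\<lambda>x. (app f ^^ fact (card (tyint Q A))) x)"
  unfolding Om_graph by (rule app_graph[OF finite_tyint[OF assms(1)] assms(2)])

lemma iter_mult:
  assumes "finite Q" "f \<in> tyint Q (Arr A A)" "x \<in> tyint Q A" "c \<ge> 1"
  shows "(app f ^^ (fact (card (tyint Q A)) * c)) x = (app f ^^ fact (card (tyint Q A))) x"
proof -
  obtain c' where "c = Suc c'" using assms(4) by (cases c) auto
  then show ?thesis
    using idem_mult[OF finite_tyint[OF assms(1)], where h="app f" and x=x and c=c'] assms app_tyint by blast
qed

lemma Om_profinite: "profinite (Arr (Arr A A) (Arr A A)) (Om A)"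
  unfolding profinite_def
proof (intro conjI allI impI)
  fix Q :: "nat set" assume "finite Q"
  show "Om A Q \<in> D Q (Arr (Arr A A) (Arr A A))"
    unfolding D_def Om_def using typing_church by blast
next
  fix Q Q' R assume a: "finite Q \<and> finite Q' \<and> partial_surj Q Q' R"
  then have fQ: "finite Q" and fQ': "finite Q'" and RQ: "R \<subseteq> Q \<times> Q'"
    by (auto simp: partial_surj_def)
  let ?N = "fact (card (tyint Q A)) :: nat"
  let ?N' = "fact (card (tyint Q' A)) :: nat"
  have key: "(app (app (Om A Q) f) x, app (app (Om A Q') f') x') \<in> lrel Q Q' R A"
    if ff: "(f, f') \<in> lrel Q Q' R (Arr A A)" and xx: "(x, x') \<in> lrel Q Q' R A" for f f' x x'
  proof -
    have f: "f \<in> tyint Q (Arr A A)" "f' \<in> tyint Q' (Arr A A)" using ff by auto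
    have x: "x \<in> tyint Q A" "x' \<in> tyint Q' A" using lrel_sub[OF RQ xx] by auto
    have "app (app (Om A Q) f) x = (app f ^^ ?N) x"
      using app_Om[OF fQ f(1)] app_graph finite_tyint[OF fQ] x by simp
    also have "\<dots> = (app f ^^ (?N * ?N')) x"
      using iter_mult[OF fQ f(1) x(1), where c="?N'"] by (simp add: Suc_le_eq)
    finally have e1: "app (app (Om A Q) f) x = (app f ^^ (?N * ?N')) x" .
    have "app (app (Om A Q') f') x' = (app f' ^^ ?N') x'"
      using app_Om[OF fQ' f(2)] app_graph finite_tyint[OF fQ'] x by simp
    also have "\<dots> = (app f' ^^ (?N' * ?N)) x'"
      using iter_mult[OF fQ' f(2) x(2), where c="?N"] by (simp add: Suc_le_eq)
    finally have e2: "app (app (Om A Q') f') x' = (app f' ^^ (?N * ?N')) x'"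
      by (simp add: mult.commute)
    show ?thesis unfolding e1 e2 by (rule funpow_lrel[OF ff xx])
  qed
  have inner: "(app (Om A Q) f, app (Om A Q') f') \<in> lrel Q Q' R (Arr A A)"
    if ff: "(f, f') \<in> lrel Q Q' R (Arr A A)" for f f'
  proof -
    have f: "f \<in> tyint Q (Arr A A)" "f' \<in> tyint Q' (Arr A A)" using ff by auto
    have "app (Om A Q) f \<in> tyint Q (Arr A A)" "app (Om A Q') f' \<in> tyint Q' (Arr A A)"
      using app_tyint[OF Om_tyint[OF fQ] f(1)] app_tyint[OF Om_tyint[OF fQ'] f(2)] by auto
    then show ?thesis using key[OF ff] by auto
  qed
  show "(Om A Q, Om A Q') \<in> lrel Q Q' R (Arr (Arr A A) (Arr A A))"
    using Om_tyint[OF fQ] Om_tyint[OF fQ'] inner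
    by (simp only: lrel.simps) blast
qed

theorem mainTheorem11:
  fixes A :: ty
  shows "\<exists>\<Omega>. profinite (Arr (Arr A A) (Arr A A)) \<Omega> \<and>
           (\<forall>M. profinite (Arr A A) M \<longrightarrow>
              (\<forall>Q. finite Q \<longrightarrow> pcomp (papp \<Omega> M) (papp \<Omega> M) Q = papp \<Omega> M Q))"
proof (intro exI conjI allI impI)
  show "profinite (Arr (Arr A A) (Arr A A)) (Om A)" by (rule Om_profinite)
next
  fix M and Q :: "nat set" assume M: "profinite (Arr A A) M" and fQ: "finite Q"
  have ps: "partial_surj Q Q (Id_on Q)"
    unfolding partial_surj_def by (auto simp: single_valued_def)
  have "(M Q, M Q) \<in> lrel Q Q (Id_on Q) (Arr A A)"
    using M fQ ps unfolding profinite_def by blast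
  then have m: "M Q \<in> tyint Q (Arr A A)" by auto
  let ?S = "tyint Q A"
  let ?N = "fact (card ?S) :: nat"
  define H where "H = (\<lambda>x. (app (M Q) ^^ ?N) x)"
  have fS: "finite ?S" using finite_tyint[OF fQ] .
  have HS: "H x \<in> ?S" if "x \<in> ?S" for x
    unfolding H_def using funpow_tyint[OF m that] .
  have HH: "H (H x) = H x" if "x \<in> ?S" for x
    unfolding H_def using idem_aux[OF fS _ that, of "app (M Q)"] app_tyint[OF m] by blast
  have pa: "papp (Om A) M Q = graph ?S H"
    unfolding papp_def H_def using app_Om[OF fQ m] .
  have "pcomp (papp (Om A) M) (papp (Om A) M) Q = vcomp (graph ?S H) (graph ?S H)"
    unfolding pcomp_def pa ..
  also have "\<dots> = graph ?S H"
  proof -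
    have "fset ((\<lambda>(x, y). (x, app (graph ?S H) y)) |`| Abs_fset ((\<lambda>x. (x, H x)) ` ?S))
        = (\<lambda>x. (x, H x)) ` ?S"
      using fS by (force simp: Abs_fset_inverse app_graph HS HH image_iff)
    then have "(\<lambda>(x, y). (x, app (graph ?S H) y)) |`| Abs_fset ((\<lambda>x. (x, H x)) ` ?S)
        = Abs_fset ((\<lambda>x. (x, H x)) ` ?S)"
      using fS by (metis fset_inverse)
    then show ?thesis unfolding graph_def by simp
  qed
  finally show "pcomp (papp (Om A) M) (papp (Om A) M) Q = papp (Om A) M Q"
    using pa by simp
qed

end
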